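(* Let $A\in\mathbb{R}^{m\times n}_{\geq 0}$ have every column nonzero, let $\mu>0$, and define $f_\mu(x)=\vec{1}^Tx+\mu\sum_{j=1}^m\exp\!\big(\tfrac{1}{\mu}(1-(Ax)_j)\big)$ and $L=4/\mu$. Let $\Delta=\{x\in\mathbb{R}^n: 0\leq x_i\leq 3/\|A_{:i}\|_\infty \ \forall i\}$. Then for any $x\in\Delta$ and $i\in[n]$: (1) if $\nabla_i f_\mu(x)\in(-1,1)$, then for all $\gamma$ with $|\gamma|\leq \frac{1}{L\|A_{:i}\|_\infty}$, $$|\nabla_i f_\mu(x)-\nabla_i f_\mu(x+\gamma e_i)|\leq L\|A_{:i}\|_\infty|\gamma|;$$ (2) if $\nabla_i f_\mu(x)\leq -1$, then for all $\gamma\leq\frac{1}{L\|A_{:i}\|_\infty}$, $$\nabla_i f_\mu(x+\gamma e_i)\leq \Big(1-\frac{L\|A_{:i}\|_\infty}{2}|\gamma|\Big)\nabla_i f_\mu(x).$$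
   Context: $A_{:i}$ denotes the $i$-th column of $A$, $\|A_{:i}\|_\infty$ its largest entry, $e_i$ the $i$-th standard basis vector, $\vec 1$ the all-ones vector, and $\nabla_i f_\mu$ the $i$-th partial derivative of $f_\mu$; explicitly $\nabla_i f_\mu(x)=1-\sum_j A_{ji}\exp(\frac1\mu(1-(Ax)_j))$. *)

theory Defs
  imports "HOL-Analysis.Analysis"
begin

text \<open>A :: real^'n^'m is an m x n matrix (rows indexed by 'm, columns by 'n).\<close>

definition col_inf_norm :: "real^'n^'m \<Rightarrow> 'n \<Rightarrow> real" where
  "col_inf_norm A i = Max {\<bar>A $ j $ i\<bar> | j. True}"

definition f_mu :: "real^'n^'m \<Rightarrow> real \<Rightarrow> real^'n \<Rightarrow> real" where
  "f_mu A \<mu> x = (\<Sum>i\<in>UNIV. x $ i) + \<mu> * (\<Sum>j\<in>UNIV. exp ((1 - (A *v x) $ j) / \<mu>))"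

definition grad_f_mu :: "real^'n^'m \<Rightarrow> real \<Rightarrow> real^'n \<Rightarrow> 'n \<Rightarrow> real" where
  "grad_f_mu A \<mu> x i = 1 - (\<Sum>j\<in>UNIV. A $ j $ i * exp ((1 - (A *v x) $ j) / \<mu>))"

definition unit_vec :: "'n \<Rightarrow> real^'n" where
  "unit_vec i = (\<chi> k. if k = i then 1 else 0)"

end

theory Submission
  imports Defs
begin

lemma exp_m1_bound:
  fixes s :: real assumes "\<bar>s\<bar> \<le> 1/2" shows "\<bar>exp s - 1\<bar> \<le> 2 * \<bar>s\<bar>"
proof (cases "s \<ge> 0")
  case True
  then show ?thesis using real_exp_bound_lemma[of s] assms exp_ge_add_one_self[of s] by auto
next
  case False
  have "exp s \<le> 1" using False by simp
  have "1 - exp s \<le> - s" using exp_ge_add_one_self[of s] by linarith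
  then show ?thesis using False \<open>exp s \<le> 1\<close> by (simp add: abs_if)
qed

lemma Av_shift:
  fixes A :: "real^'n^'m"
  shows "(A *v (x + \<gamma> *\<^sub>R unit_vec i)) $ j = (A *v x) $ j + \<gamma> * A $ j $ i"
proof -
  have "(A *v (\<gamma> *\<^sub>R unit_vec i)) $ j = (\<Sum>k\<in>UNIV. A $ j $ k * (if k = i then \<gamma> else 0))"
    by (simp add: matrix_vector_mult_def unit_vec_def if_distrib cong: if_cong)
  also have "\<dots> = \<gamma> * A $ j $ i"
    by (simp add: if_distrib cong: if_cong)
  finally show ?thesis by (simp add: matrix_vector_right_distrib)
qed

theorem lemma5:
  fixes A :: "real^'n^'m" and \<mu> L :: real and x :: "real^'n" and i :: 'n
  assumes nonneg: "\<forall>j k. A $ j $ k \<ge> 0"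
    and cols_nonzero: "\<forall>k. \<exists>j. A $ j $ k \<noteq> 0"
    and mu_pos: "\<mu> > 0"
    and L_def: "L = 4 / \<mu>"
    and x_in: "\<forall>k. 0 \<le> x $ k \<and> x $ k \<le> 3 / col_inf_norm A k"
  shows "(grad_f_mu A \<mu> x i \<in> {-1<..<1} \<longrightarrow>
            (\<forall>\<gamma>. \<bar>\<gamma>\<bar> \<le> 1 / (L * col_inf_norm A i) \<longrightarrow>
               \<bar>grad_f_mu A \<mu> x i - grad_f_mu A \<mu> (x + \<gamma> *\<^sub>R unit_vec i) i\<bar>
                 \<le> L * col_inf_norm A i * \<bar>\<gamma>\<bar>))
       \<and> (grad_f_mu A \<mu> x i \<le> -1 \<longrightarrow>
            (\<forall>\<gamma>. \<gamma> \<le> 1 / (L * col_inf_norm A i) \<longrightarrow>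
               grad_f_mu A \<mu> (x + \<gamma> *\<^sub>R unit_vec i) i
                 \<le> (1 - L * col_inf_norm A i / 2 * \<bar>\<gamma>\<bar>) * grad_f_mu A \<mu> x i))"
proof -
  define c where "c = col_inf_norm A i"
  define w where "w j = exp ((1 - (A *v x) $ j) / \<mu>)" for j
  define S where "S = (\<Sum>j\<in>UNIV. A $ j $ i * w j)"
  have fin: "finite {\<bar>A $ j $ i\<bar> | j. True}"
    using finite_imageI[of "UNIV::'m set" "\<lambda>j. \<bar>A $ j $ i\<bar>"] by (simp add: image_def)
  have le_c: "A $ j $ i \<le> c" for j
    unfolding c_def col_inf_norm_def
    by (rule order_trans[OF abs_ge_self Max_ge[OF fin]]) blast
  obtain j0 where "A $ j0 $ i \<noteq> 0" using cols_nonzero by blast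
  hence "A $ j0 $ i > 0" using nonneg by (metis order_le_less)
  hence cpos: "c > 0" using le_c[of j0] by linarith
  have wpos: "w j > 0" for j by (simp add: w_def)
  have Spos: "S \<ge> 0" unfolding S_def using nonneg wpos
    by (intro sum_nonneg) (simp add: less_imp_le)
  have g0: "grad_f_mu A \<mu> x i = 1 - S" by (simp add: grad_f_mu_def S_def w_def)
  define t where "t \<gamma> j = \<gamma> * A $ j $ i / \<mu>" for \<gamma> j
  have g1: "grad_f_mu A \<mu> (x + \<gamma> *\<^sub>R unit_vec i) i
      = 1 - (\<Sum>j\<in>UNIV. A $ j $ i * w j * exp (- t \<gamma> j))" for \<gamma>
  proof -
    have "exp ((1 - (A *v (x + \<gamma> *\<^sub>R unit_vec i)) $ j) / \<mu>) = w j * exp (- t \<gamma> j)" for j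
    proof -
      have "(1 - (A *v (x + \<gamma> *\<^sub>R unit_vec i)) $ j) / \<mu> = (1 - (A *v x) $ j) / \<mu> + (- t \<gamma> j)"
        by (simp add: Av_shift t_def diff_divide_distrib add_divide_distrib)
      thus ?thesis by (simp only: w_def exp_add)
    qed
    thus ?thesis by (simp add: grad_f_mu_def mult.assoc)
  qed
  have Lc: "L * c = 4 * c / \<mu>" by (simp add: L_def)
  have tb: "\<bar>t \<gamma> j\<bar> \<le> \<bar>\<gamma>\<bar> * c / \<mu>" for \<gamma> j
  proof -
    have "\<bar>t \<gamma> j\<bar> = \<bar>\<gamma>\<bar> * A $ j $ i / \<mu>" using nonneg mu_pos by (simp add: t_def abs_mult)
    also have "\<dots> \<le> \<bar>\<gamma>\<bar> * c / \<mu>" using le_c[of j] mu_pos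
      by (intro divide_right_mono mult_left_mono) auto
    finally show ?thesis .
  qed
  have P1: "\<bar>grad_f_mu A \<mu> x i - grad_f_mu A \<mu> (x + \<gamma> *\<^sub>R unit_vec i) i\<bar> \<le> L * c * \<bar>\<gamma>\<bar>"
    if "grad_f_mu A \<mu> x i \<in> {-1<..<1}" "\<bar>\<gamma>\<bar> \<le> 1 / (L * c)" for \<gamma>
  proof -
    have S2: "S < 2" using that(1) g0 by auto
    have "\<bar>\<gamma>\<bar> * (L*c) \<le> 1" using that(2) cpos mu_pos Lc
      by (simp add: pos_le_divide_eq)
    hence tau: "\<bar>\<gamma>\<bar> * c / \<mu> \<le> 1/4" using Lc mu_pos by (simp add: field_simps)
    have "grad_f_mu A \<mu> x i - grad_f_mu A \<mu> (x + \<gamma> *\<^sub>R unit_vec i) i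
        = (\<Sum>j\<in>UNIV. A $ j $ i * w j * (exp (- t \<gamma> j) - 1))"
      by (simp add: g0 g1 S_def algebra_simps sum_subtractf)
    hence "\<bar>grad_f_mu A \<mu> x i - grad_f_mu A \<mu> (x + \<gamma> *\<^sub>R unit_vec i) i\<bar>
        \<le> (\<Sum>j\<in>UNIV. \<bar>A $ j $ i * w j * (exp (- t \<gamma> j) - 1)\<bar>)" by (simp add: sum_abs)
    also have "\<dots> \<le> (\<Sum>j\<in>UNIV. A $ j $ i * w j * (2 * (\<bar>\<gamma>\<bar> * c / \<mu>)))"
    proof (intro sum_mono)
      fix j
      have "\<bar>exp (- t \<gamma> j) - 1\<bar> \<le> 2 * \<bar>- t \<gamma> j\<bar>"
        using tb[of \<gamma> j] tau by (intro exp_m1_bound) (simp only: abs_minus_cancel; linarith)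
      also have "\<dots> \<le> 2 * (\<bar>\<gamma>\<bar> * c / \<mu>)" using tb[of \<gamma> j] by simp
      finally have e: "\<bar>exp (- t \<gamma> j) - 1\<bar> \<le> 2 * (\<bar>\<gamma>\<bar> * c / \<mu>)" .
      have nn: "A $ j $ i * w j \<ge> 0" using nonneg wpos[of j] by simp
      show "\<bar>A $ j $ i * w j * (exp (- t \<gamma> j) - 1)\<bar> \<le> A $ j $ i * w j * (2 * (\<bar>\<gamma>\<bar> * c / \<mu>))"
        using mult_left_mono[OF e nn] nn by (simp only: abs_mult[of "A $ j $ i * w j"] abs_of_nonneg)
    qed
    also have "\<dots> = S * (2 * (\<bar>\<gamma>\<bar> * c / \<mu>))" unfolding S_def by (rule sum_distrib_right[symmetric])
    also have "\<dots> \<le> 2 * (2 * (\<bar>\<gamma>\<bar> * c / \<mu>))"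
      using S2 cpos mu_pos by (intro mult_right_mono) auto
    also have "\<dots> = L * c * \<bar>\<gamma>\<bar>" using Lc by simp
    finally show ?thesis .
  qed
  have P2: "grad_f_mu A \<mu> (x + \<gamma> *\<^sub>R unit_vec i) i \<le> (1 - L * c / 2 * \<bar>\<gamma>\<bar>) * grad_f_mu A \<mu> x i"
    if "grad_f_mu A \<mu> x i \<le> -1" "\<gamma> \<le> 1 / (L * c)" for \<gamma>
  proof -
    have S2: "S \<ge> 2" using that(1) g0 by auto
    define S' where "S' = (\<Sum>j\<in>UNIV. A $ j $ i * w j * exp (- t \<gamma> j))"
    define \<tau> where "\<tau> = \<gamma> * c / \<mu>"
    have fac: "1 - L * c / 2 * \<bar>\<gamma>\<bar> = 1 - 2 * \<bar>\<tau>\<bar>"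
      using Lc mu_pos cpos by (simp add: \<tau>_def abs_mult field_simps)
    show ?thesis
    proof (cases "\<gamma> \<ge> 0")
      case True
      have "\<gamma> * (L*c) \<le> 1" using that(2) cpos mu_pos Lc
        by (simp add: pos_le_divide_eq)
      hence tau: "\<tau> \<le> 1/4" using Lc mu_pos by (simp add: field_simps \<tau>_def)
      have tau0: "\<tau> \<ge> 0" using True cpos mu_pos by (simp add: \<tau>_def)
      have "S' \<ge> (\<Sum>j\<in>UNIV. A $ j $ i * w j * exp (- \<tau>))"
        unfolding S'_def
      proof (intro sum_mono)
        fix j
        have "t \<gamma> j \<le> \<tau>" using tb[of \<gamma> j] True by (simp add: \<tau>_def)
        hence "exp (- \<tau>) \<le> exp (- t \<gamma> j)" by simp
        moreover have "A $ j $ i * w j \<ge> 0" using nonneg wpos[of j] by simp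
        ultimately show "A $ j $ i * w j * exp (- \<tau>) \<le> A $ j $ i * w j * exp (- t \<gamma> j)"
          by (intro mult_left_mono)
      qed
      also have "(\<Sum>j\<in>UNIV. A $ j $ i * w j * exp (- \<tau>)) = S * exp (- \<tau>)"
        by (simp add: S_def sum_distrib_right)
      finally have "S' \<ge> S * exp (- \<tau>)" .
      moreover have "exp (- \<tau>) \<ge> 1 - \<tau>" using exp_ge_add_one_self[of "-\<tau>"] by simp
      ultimately have "S' \<ge> S * (1 - \<tau>)" using mult_left_mono[OF \<open>exp (- \<tau>) \<ge> 1 - \<tau>\<close> Spos] by linarith
      moreover have "S * \<tau> \<ge> 2 * \<tau>" using S2 tau0 by (intro mult_right_mono) auto
      ultimately have "1 - S' \<le> (1 - 2 * \<tau>) * (1 - S)" by (simp add: algebra_simps)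
      thus ?thesis using g0 g1 fac tau0 by (simp add: S'_def)
    next
      case False
      have "S' \<ge> S" unfolding S'_def S_def
      proof (intro sum_mono)
        fix j
        have "t \<gamma> j \<le> 0" using False nonneg mu_pos by (simp add: t_def mult_nonpos_nonneg divide_nonpos_pos)
        hence "1 \<le> exp (- t \<gamma> j)" by simp
        moreover have "A $ j $ i * w j \<ge> 0" using nonneg wpos[of j] by simp
        ultimately show "A $ j $ i * w j \<le> A $ j $ i * w j * exp (- t \<gamma> j)"
          using mult_left_mono[of 1 "exp (- t \<gamma> j)" "A $ j $ i * w j"] by simp
      qed
      moreover have "(1 - 2 * \<bar>\<tau>\<bar>) * (1 - S) \<ge> 1 - S"
      proof -
        have "2 * \<bar>\<tau>\<bar> * (S - 1) \<ge> 0" using S2 by simp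
        thus ?thesis by (simp add: algebra_simps)
      qed
      ultimately show ?thesis using g0 g1 fac by (simp add: S'_def)
    qed
  qed
  show ?thesis using P1 P2 unfolding c_def by blast
qed

end
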